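(* Let $S$ be an idempotent semiring. The following are equivalent: (1) $\mathcal{D}^{\bullet}$ is the least distributive lattice congruence on $S$; (2) $S$ satisfies $x+xyx+x\approx x$ and $\mathcal{D}^{+}\subseteq\mathcal{D}^{\bullet}$; (3) $S$ satisfies the identity $x\approx xyx+x+xyx$.
   Context: An idempotent semiring is an algebra $(S,+,\cdot)$ with two binary operations such that $(S,+)$ and $(S,\cdot)$ are bands (associative, with $x+x=x$ and $xx=x$), and both distributive laws $x(y+z)=xy+xz$ and $(x+y)z=xz+yz$ hold; addition is not assumed commutative. A distributive lattice congruence on $S$ is a congruence $\rho$ such that $S/\rho$ satisfies $x+y\approx y+x$, $xy\approx yx$ and $x+xy\approx x$. Green's relations on the reducts: $a\,\mathcal{D}^{\bullet}\,b$ iff $aba=a$ and $bab=b$; $a\,\mathcal{D}^{+}\,b$ iff $a+b+a=a$ and $b+a+b=b$. *)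

theory Defs
  imports Main
begin

text \<open>An idempotent semiring on the whole type 'a, with addition ad and
multiplication mu (addition not assumed commutative).\<close>

definition idempotent_semiring :: "('a \<Rightarrow> 'a \<Rightarrow> 'a) \<Rightarrow> ('a \<Rightarrow> 'a \<Rightarrow> 'a) \<Rightarrow> bool" where
  "idempotent_semiring ad mu \<longleftrightarrow>
     (\<forall>x y z. ad (ad x y) z = ad x (ad y z)) \<and> (\<forall>x. ad x x = x) \<and>
     (\<forall>x y z. mu (mu x y) z = mu x (mu y z)) \<and> (\<forall>x. mu x x = x) \<and>
     (\<forall>x y z. mu x (ad y z) = ad (mu x y) (mu x z)) \<and>
     (\<forall>x y z. mu (ad x y) z = ad (mu x z) (mu y z))"

definition semiring_congruence ::
  "('a \<Rightarrow> 'a \<Rightarrow> 'a) \<Rightarrow> ('a \<Rightarrow> 'a \<Rightarrow> 'a) \<Rightarrow> ('a \<Rightarrow> 'a \<Rightarrow> bool) \<Rightarrow> bool" where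
  "semiring_congruence ad mu \<rho> \<longleftrightarrow>
     equivp \<rho> \<and>
     (\<forall>a b c d. \<rho> a b \<longrightarrow> \<rho> c d \<longrightarrow> \<rho> (ad a c) (ad b d)) \<and>
     (\<forall>a b c d. \<rho> a b \<longrightarrow> \<rho> c d \<longrightarrow> \<rho> (mu a c) (mu b d))"

definition dl_congruence ::
  "('a \<Rightarrow> 'a \<Rightarrow> 'a) \<Rightarrow> ('a \<Rightarrow> 'a \<Rightarrow> 'a) \<Rightarrow> ('a \<Rightarrow> 'a \<Rightarrow> bool) \<Rightarrow> bool" where
  "dl_congruence ad mu \<rho> \<longleftrightarrow>
     semiring_congruence ad mu \<rho> \<and>
     (\<forall>x y. \<rho> (ad x y) (ad y x)) \<and>
     (\<forall>x y. \<rho> (mu x y) (mu y x)) \<and>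
     (\<forall>x y. \<rho> (ad x (mu x y)) x)"

definition least_dl_congruence ::
  "('a \<Rightarrow> 'a \<Rightarrow> 'a) \<Rightarrow> ('a \<Rightarrow> 'a \<Rightarrow> 'a) \<Rightarrow> ('a \<Rightarrow> 'a \<Rightarrow> bool) \<Rightarrow> bool" where
  "least_dl_congruence ad mu \<rho> \<longleftrightarrow>
     dl_congruence ad mu \<rho> \<and> (\<forall>\<sigma>. dl_congruence ad mu \<sigma> \<longrightarrow> (\<forall>a b. \<rho> a b \<longrightarrow> \<sigma> a b))"

text \<open>Green's D relation on the multiplicative band: a D b iff aba = a and bab = b.\<close>
definition D_mul :: "('a \<Rightarrow> 'a \<Rightarrow> 'a) \<Rightarrow> 'a \<Rightarrow> 'a \<Rightarrow> bool" where
  "D_mul mu a b \<longleftrightarrow> mu (mu a b) a = a \<and> mu (mu b a) b = b"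

definition D_add :: "('a \<Rightarrow> 'a \<Rightarrow> 'a) \<Rightarrow> 'a \<Rightarrow> 'a \<Rightarrow> bool" where
  "D_add ad a b \<longleftrightarrow> ad (ad a b) a = a \<and> ad (ad b a) b = b"

end

theory Submission
  imports Defs
begin

locale bnd = fixes f :: "'a \<Rightarrow> 'a \<Rightarrow> 'a"
  assumes as: "f (f x y) z = f x (f y z)" and id: "f x x = x"
begin
lemma B1: "x = f (f p y) q \<Longrightarrow> f (f x y) x = x"
  by (metis as id)
lemma B2: "f (f x a) x = x \<Longrightarrow> f (f x c) x = x \<Longrightarrow> f (f x (f a c)) x = x"
  by (metis as id)
lemma first: "f (f (f x q) x) (f x q) = f x q"
  by (metis as id)
lemma last: "f (f (f p x) x) (f p x) = f p x"
  by (metis as id)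
lemma DM1: "f (f a b) a = a \<Longrightarrow> f (f (f a c) (f b c)) (f a c) = f a c"
  by (metis as id)
lemma DM2: "f (f a b) a = a \<Longrightarrow> f (f (f c a) (f c b)) (f c a) = f c a"
  by (metis as id)
lemma tr: "f (f a b) a = a \<Longrightarrow> f (f b c) b = b \<Longrightarrow> f (f c b) c = c \<Longrightarrow> f (f a c) a = a"
  by (metis as id)
lemma l32: "x = f (f a x) a \<Longrightarrow> f (f x a) x = x"
  by (metis as id)
lemma l23a: "f (f x a) x = x \<Longrightarrow> f (f (f (f a x) a) x) (f (f a x) a) = f (f a x) a"
  by (metis as id)
lemma l23b: "f (f x a) x = x \<Longrightarrow> f (f x (f (f a x) a)) x = x"
  by (metis as id)
lemma idl: "f x (f x y) = f x y"
  by (metis as id)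
end

locale isr =
  fixes ad mu :: "'a \<Rightarrow> 'a \<Rightarrow> 'a"
  assumes aa: "ad (ad x y) z = ad x (ad y z)" and ai: "ad x x = x"
    and ma: "mu (mu x y) z = mu x (mu y z)" and mi: "mu x x = x"
    and ld: "mu x (ad y z) = ad (mu x y) (mu x z)"
    and rd: "mu (ad x y) z = ad (mu x z) (mu y z)"
begin
sublocale A: bnd ad by unfold_locales (fact aa ai)+
sublocale M: bnd mu by unfold_locales (fact ma mi)+

definition "I2 \<longleftrightarrow> (\<forall>x y. ad (ad x (mu (mu x y) x)) x = x)"
definition "DD \<longleftrightarrow> (\<forall>a b. D_add ad a b \<longrightarrow> D_mul mu a b)"
definition "I3 \<longleftrightarrow> (\<forall>x y. x = ad (ad (mu (mu x y) x) x) (mu (mu x y) x))"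

lemma l3to2: assumes "I3" shows "I2" "DD"
proof -
  show "I2" unfolding I2_def
  proof (intro allI)
    fix x y
    have "x = ad (ad (mu (mu x y) x) x) (mu (mu x y) x)" using assms I3_def by blast
    thus "ad (ad x (mu (mu x y) x)) x = x" by (rule A.l32)
  qed
  show "DD" unfolding DD_def D_add_def D_mul_def
  proof (intro allI impI)
    fix a b assume h: "ad (ad a b) a = a \<and> ad (ad b a) b = b"
    have g: "\<And>a b. ad (ad b a) b = b \<Longrightarrow> mu (mu a b) a = a"
    proof -
      fix a b assume hb: "ad (ad b a) b = b"
      have "mu (mu a b) a = mu (mu a (ad (ad b a) b)) a" using hb by simp
      also have "\<dots> = ad (ad (mu (mu a b) a) a) (mu (mu a b) a)"
        by (simp add: ld rd ma mi M.idl)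
      also have "\<dots> = a" using assms I3_def by metis
      finally show "mu (mu a b) a = a" .
    qed
    show "mu (mu a b) a = a \<and> mu (mu b a) b = b" using h g by blast
  qed
qed

lemma l2to3: assumes "I2" "DD" shows "I3"
  unfolding I3_def
proof (intro allI)
  fix x y
  define a where "a = mu (mu x y) x"
  define z where "z = ad (ad a x) a"
  have h: "ad (ad x a) x = x" using assms(1) unfolding I2_def a_def by blast
  have "D_add ad x z" unfolding D_add_def z_def
    using A.l23a[OF h] A.l23b[OF h] by simp
  hence "mu (mu x z) x = x" using assms(2) unfolding DD_def D_mul_def by blast
  moreover have "mu (mu x z) x = z"
    unfolding z_def a_def by (simp add: ld rd ma mi M.idl)
  ultimately show "x = ad (ad (mu (mu x y) x) x) (mu (mu x y) x)"
    using z_def a_def by simp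
qed

lemma key: assumes "I2" "DD"
  shows "ad x (mu (mu x y) x) = x"
proof -
  define a where "a = mu (mu x y) x"
  have h: "ad (ad x a) x = x" using assms(1) unfolding I2_def a_def by blast
  have "D_add ad x (ad x a)" unfolding D_add_def using h by (metis aa ai)
  hence "mu (mu x (ad x a)) x = x" using assms(2) unfolding DD_def D_mul_def by blast
  moreover have "mu (mu x (ad x a)) x = ad x a"
    unfolding a_def by (simp add: ld rd ma mi M.idl)
  ultimately show ?thesis using a_def by simp
qed

lemma G: assumes "I2" "DD" and w: "w = mu (mu u v) u" and "ad (ad w u) w = w"
  shows "w = u"
proof -
  have "ad (ad u w) u = u" using assms(1) w unfolding I2_def by blast
  hence "D_add ad u w" using assms(4) unfolding D_add_def by simp
  hence "mu (mu u w) u = u" using assms(2) unfolding DD_def D_mul_def by blast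
  moreover have "mu (mu u w) u = w" using w by (simp add: ma mi M.idl)
  ultimately show ?thesis by simp
qed

lemma P1: assumes "I2" "DD" and ab: "mu (mu a b) a = a"
  shows "mu (mu (ad a c) (ad b c)) (ad a c) = ad a c"
proof -
  define w where "w = mu (mu (ad a c) (ad b c)) (ad a c)"
  have e1: "w = ad (mu a (mu b a))
      (ad (mu c (mu b a))
        (ad (mu a (mu c a))
          (ad (mu c (mu c a))
            (ad (mu a (mu b c))
              (ad (mu c (mu b c)) (ad (mu a (mu c c)) (mu c (mu c c))))))))"
    unfolding w_def by (simp only: ld rd aa ma)
  have s1: "ad (ad w a) w = w" using A.first e1 ab by (metis ma)
  have e2: "w = ad (ad (mu a (mu b a))
      (ad (mu c (mu b a))
        (ad (mu a (mu c a))
          (ad (mu c (mu c a))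
            (ad (mu a (mu b c))
              (ad (mu c (mu b c)) (mu a (mu c c)))))))) (mu c (mu c c))"
    using e1 by (simp only: aa)
  have s2: "ad (ad w c) w = w" using A.last e2 mi by metis
  have "ad (ad w (ad a c)) w = w" using A.B2[OF s1 s2] .
  thus ?thesis using G[OF assms(1,2) w_def] w_def by simp
qed

lemma P2: assumes "I2" "DD" and ab: "mu (mu a b) a = a"
  shows "mu (mu (ad c a) (ad c b)) (ad c a) = ad c a"
proof -
  define w where "w = mu (mu (ad c a) (ad c b)) (ad c a)"
  have e1: "w = ad (mu c (mu c c))
     (ad (mu a (mu c c))
       (ad (mu c (mu b c))
         (ad (mu a (mu b c))
           (ad (mu c (mu c a))
             (ad (mu a (mu c a)) (ad (mu c (mu b a)) (mu a (mu b a))))))))"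
    unfolding w_def by (simp only: ld rd aa ma)
  have s1: "ad (ad w c) w = w" using A.first e1 mi by metis
  have e2: "w = ad (ad (mu c (mu c c))
     (ad (mu a (mu c c))
       (ad (mu c (mu b c))
         (ad (mu a (mu b c))
           (ad (mu c (mu c a))
             (ad (mu a (mu c a)) (mu c (mu b a)))))))) (mu a (mu b a))"
    using e1 by (simp only: aa)
  have s2: "ad (ad w a) w = w" using A.last e2 ab by (metis ma)
  have "ad (ad w (ad c a)) w = w" using A.B2[OF s1 s2] .
  thus ?thesis using G[OF assms(1,2) w_def] w_def by simp
qed

lemma P3: assumes "I2" "DD"
  shows "mu (mu (ad x y) (ad y x)) (ad x y) = ad x y"
proof -
  define w where "w = mu (mu (ad x y) (ad y x)) (ad x y)"
  have e1: "w = ad (mu x (mu y x))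
     (ad (mu y (mu y x))
       (ad (mu x (mu x x))
         (ad (mu y (mu x x))
           (ad (mu x (mu y y))
             (ad (mu y (mu y y)) (ad (mu x (mu x y)) (mu y (mu x y))))))))"
    unfolding w_def by (simp only: ld rd aa ma)
  have e2: "w = ad (ad (ad (mu x (mu y x)) (mu y (mu y x))) (mu x (mu x x)))
         (ad (mu y (mu x x))
           (ad (mu x (mu y y))
             (ad (mu y (mu y y)) (ad (mu x (mu x y)) (mu y (mu x y))))))"
    using e1 by (simp only: aa)
  have s1: "ad (ad w x) w = w" using A.B1 e2 mi by metis
  have e3: "w = ad (ad (ad (mu x (mu y x))
     (ad (mu y (mu y x))
       (ad (mu x (mu x x))
         (ad (mu y (mu x x))
           (mu x (mu y y)))))) (mu y (mu y y))) (ad (mu x (mu x y)) (mu y (mu x y)))"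
    using e1 by (simp only: aa)
  have s2: "ad (ad w y) w = w" using A.B1 e3 mi by metis
  have "ad (ad w (ad x y)) w = w" using A.B2[OF s1 s2] .
  thus ?thesis using G[OF assms(1,2) w_def] w_def by simp
qed

lemma Dsym: "D_mul mu a b \<Longrightarrow> D_mul mu b a" unfolding D_mul_def by simp

lemma Dtrans: "D_mul mu a b \<Longrightarrow> D_mul mu b c \<Longrightarrow> D_mul mu a c"
  unfolding D_mul_def using M.tr by metis

lemma equivD: "equivp (D_mul mu)"
proof (rule equivpI)
  show "reflp (D_mul mu)" unfolding reflp_def D_mul_def by (simp add: mi)
  show "symp (D_mul mu)" unfolding symp_def using Dsym by blast
  show "transp (D_mul mu)" unfolding transp_def using Dtrans by blast
qed

lemma dl_if: assumes "I2" "DD" shows "dl_congruence ad mu (D_mul mu)"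
proof -
  have pr: "D_mul mu (ad a c) (ad b c) \<and> D_mul mu (ad c a) (ad c b)" if "D_mul mu a b" for a b c
    using that P1[OF assms] P2[OF assms] unfolding D_mul_def by blast
  have mr: "D_mul mu (mu a c) (mu b c) \<and> D_mul mu (mu c a) (mu c b)" if "D_mul mu a b" for a b c
    using that M.DM1 M.DM2 unfolding D_mul_def by blast
  have c1: "D_mul mu (ad a c) (ad b d)" if "D_mul mu a b" "D_mul mu c d" for a b c d
    using pr that Dtrans by blast
  have c2: "D_mul mu (mu a c) (mu b d)" if "D_mul mu a b" "D_mul mu c d" for a b c d
    using mr that Dtrans by blast
  have cm1: "D_mul mu (ad x y) (ad y x)" for x y
    using P3[OF assms, of x y] P3[OF assms, of y x] unfolding D_mul_def by blast
  have cm2: "D_mul mu (mu x y) (mu y x)" for x y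
    unfolding D_mul_def by (metis M.as M.id)
  have ab: "D_mul mu (ad x (mu x y)) x" for x y
  proof -
    have k1: "ad x (mu x (mu y x)) = x" using key[OF assms, of x y] by (simp add: ma)
    have "mu (mu x (ad x (mu x y))) x = ad x (mu x (mu y x))" by (simp add: ld rd ma mi M.idl)
    hence h1: "mu (mu x (ad x (mu x y))) x = x" using k1 by simp
    have "mu (mu (ad x (mu x y)) x) (ad x (mu x y)) = mu (ad x (mu x (mu y x))) (ad x (mu x y))"
      by (simp add: ld rd ma mi M.idl)
    also have "\<dots> = ad x (mu x y)" using k1 by (simp add: ld mi M.idl)
    finally show ?thesis using h1 unfolding D_mul_def by simp
  qed
  show ?thesis unfolding dl_congruence_def semiring_congruence_def
    using equivD c1 c2 cm1 cm2 ab by blast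
qed

lemma least_gen: "dl_congruence ad mu \<sigma> \<Longrightarrow> D_mul mu a b \<Longrightarrow> \<sigma> a b"
proof -
  assume s: "dl_congruence ad mu \<sigma>" and d: "D_mul mu a b"
  have eq: "equivp \<sigma>" and cm: "\<And>a b c d. \<sigma> a b \<Longrightarrow> \<sigma> c d \<Longrightarrow> \<sigma> (mu a c) (mu b d)"
    and co: "\<And>x y. \<sigma> (mu x y) (mu y x)"
    using s unfolding dl_congruence_def semiring_congruence_def by blast+
  have r: "\<And>x. \<sigma> x x" using eq by (meson equivp_reflp)
  have sy: "\<And>x y. \<sigma> x y \<Longrightarrow> \<sigma> y x" using eq by (meson equivp_symp)
  have t: "\<And>x y z. \<sigma> x y \<Longrightarrow> \<sigma> y z \<Longrightarrow> \<sigma> x z" using eq by (meson equivp_transp)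
  have 1: "\<sigma> (mu (mu a b) a) (mu a (mu a b))" using co by blast
  have 2: "\<sigma> (mu (mu b a) b) (mu b (mu b a))" using co by blast
  have "mu a (mu a b) = mu a b" by (simp add: M.idl)
  hence "\<sigma> a (mu a b)" using 1 d unfolding D_mul_def by simp
  moreover have "mu b (mu b a) = mu b a" by (simp add: M.idl)
  hence "\<sigma> b (mu b a)" using 2 d unfolding D_mul_def by simp
  ultimately show "\<sigma> a b" using co t sy by blast
qed

lemma from_dl: assumes "dl_congruence ad mu (D_mul mu)" shows "I2" "DD"
proof -
  note s = assms[unfolded dl_congruence_def semiring_congruence_def]
  have eq: "equivp (D_mul mu)" using s by blast
  have ca: "\<And>a b c d. D_mul mu a b \<Longrightarrow> D_mul mu c d \<Longrightarrow> D_mul mu (ad a c) (ad b d)"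
    and co: "\<And>x y. D_mul mu (ad x y) (ad y x)"
    and ab: "\<And>x y. D_mul mu (ad x (mu x y)) x"
    using s by blast+
  have r: "\<And>x. D_mul mu x x" using eq by (meson equivp_reflp)
  show "I2" unfolding I2_def
  proof (intro allI)
    fix x y
    have "D_mul mu (ad (ad x (mu x (mu y x))) x) (ad x x)" using ca[OF ab r] .
    hence "D_mul mu (ad (ad x (mu (mu x y) x)) x) x" by (simp add: ma ai)
    hence "mu (mu x (ad (ad x (mu (mu x y) x)) x)) x = x" unfolding D_mul_def by blast
    moreover have "mu (mu x (ad (ad x (mu (mu x y) x)) x)) x = ad (ad x (mu (mu x y) x)) x"
      by (simp add: ld rd ma mi M.idl aa)
    ultimately show "ad (ad x (mu (mu x y) x)) x = x" by simp
  qed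
  show "DD" unfolding DD_def
  proof (intro allI impI)
    fix a b assume "D_add ad a b"
    hence h: "ad (ad a b) a = a" "ad (ad b a) b = b" unfolding D_add_def by auto
    have "D_mul mu (ad (ad a b) a) (ad a (ad a b))" using co by blast
    hence 1: "D_mul mu a (ad a b)" using h by (simp add: aa A.idl)
    have "D_mul mu (ad (ad b a) b) (ad b (ad b a))" using co by blast
    hence 2: "D_mul mu b (ad b a)" using h by (simp add: aa A.idl)
    show "D_mul mu a b" using 1 2 co Dtrans Dsym by blast
  qed
qed

end

theorem theorem3p1:
  fixes ad mu :: "'a \<Rightarrow> 'a \<Rightarrow> 'a"
  assumes "idempotent_semiring ad mu"
  shows "(least_dl_congruence ad mu (D_mul mu)
            \<longleftrightarrow> ((\<forall>x y. ad (ad x (mu (mu x y) x)) x = x) \<and>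
                 (\<forall>a b. D_add ad a b \<longrightarrow> D_mul mu a b)))
       \<and> (((\<forall>x y. ad (ad x (mu (mu x y) x)) x = x) \<and>
                 (\<forall>a b. D_add ad a b \<longrightarrow> D_mul mu a b))
            \<longleftrightarrow> (\<forall>x y. x = ad (ad (mu (mu x y) x) x) (mu (mu x y) x)))"
proof -
  interpret isr ad mu using assms unfolding idempotent_semiring_def
    by unfold_locales blast+
  have a: "least_dl_congruence ad mu (D_mul mu) \<longleftrightarrow> I2 \<and> DD"
    unfolding least_dl_congruence_def using from_dl dl_if least_gen by blast
  have b: "I2 \<and> DD \<longleftrightarrow> I3" using l3to2 l2to3 by blast
  show ?thesis using a b unfolding I2_def DD_def I3_def by simp
qed

end
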